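(* Let $G$ be a finite group, let $M$ be a subgroup of $G$, and let $K$ be a normal subgroup of $G$ contained in $M$. Suppose that $G$ is a split extension of $K$ by $G/K$ (that is, $K$ has a complement in $G$). Then $M$ is a perfect code of $G$ if and only if $M/K$ is a perfect code of $G/K$.
   Context: For a group $G$ with identity $e$ and an inverse-closed subset $S\subseteq G\setminus\{e\}$, the Cayley graph $\mathrm{Cay}(G,S)$ has vertex set $G$ and edges $\{g,sg\}$ for $s\in S$, $g\in G$. A perfect code in a graph is an independent set $C$ of vertices such that every vertex outside $C$ is adjacent to exactly one vertex of $C$. A subgroup $H$ of $G$ is a perfect code of $G$ if some Cayley graph of $G$ admits $H$ as a perfect code. *)

theory Defs
  imports "HOL-Algebra.Algebra"
begin

definition cayley_adj :: "('a, 'b) monoid_scheme \<Rightarrow> 'a set \<Rightarrow> 'a \<Rightarrow> 'a \<Rightarrow> bool" where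
  "cayley_adj G S x y \<longleftrightarrow> x \<in> carrier G \<and> y \<in> carrier G \<and>
     ((\<exists>s\<in>S. y = s \<otimes>\<^bsub>G\<^esub> x) \<or> (\<exists>s\<in>S. x = s \<otimes>\<^bsub>G\<^esub> y))"

definition cayley_connection_set :: "('a, 'b) monoid_scheme \<Rightarrow> 'a set \<Rightarrow> bool" where
  "cayley_connection_set G S \<longleftrightarrow> S \<subseteq> carrier G - {\<one>\<^bsub>G\<^esub>} \<and> (\<forall>s\<in>S. inv\<^bsub>G\<^esub> s \<in> S)"

definition perfect_code_in :: "('a, 'b) monoid_scheme \<Rightarrow> 'a set \<Rightarrow> 'a set \<Rightarrow> bool" where
  "perfect_code_in G S C \<longleftrightarrow> C \<subseteq> carrier G \<and>
     (\<forall>x\<in>C. \<forall>y\<in>C. \<not> cayley_adj G S x y) \<and>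
     (\<forall>x\<in>carrier G - C. \<exists>!c. c \<in> C \<and> cayley_adj G S x c)"

definition subgroup_perfect_code :: "'a set \<Rightarrow> ('a, 'b) monoid_scheme \<Rightarrow> bool" where
  "subgroup_perfect_code H G \<longleftrightarrow> subgroup H G \<and>
     (\<exists>S. cayley_connection_set G S \<and> perfect_code_in G S H)"

end

theory Submission imports Defs begin

lemma adj_iff:
  fixes G (structure)
  assumes "group G" "cayley_connection_set G S"
  shows "cayley_adj G S x y \<longleftrightarrow> x \<in> carrier G \<and> y \<in> carrier G \<and> x \<otimes>\<^bsub>G\<^esub> inv\<^bsub>G\<^esub> y \<in> S"
proof -
  interpret group G by fact
  have SS: "S \<subseteq> carrier G" "\<And>s. s \<in> S \<Longrightarrow> inv s \<in> S"
    using assms(2) unfolding cayley_connection_set_def by auto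
  show ?thesis
  proof (cases "x \<in> carrier G \<and> y \<in> carrier G")
    case True
    then have xy: "x \<in> carrier G" "y \<in> carrier G" by auto
    have 1: "(\<exists>s\<in>S. y = s \<otimes> x) \<longleftrightarrow> inv (x \<otimes> inv y) \<in> S"
    proof
      assume "\<exists>s\<in>S. y = s \<otimes> x"
      then obtain s where s: "s \<in> S" "y = s \<otimes> x" by auto
      have "inv (x \<otimes> inv y) = s" using s SS xy
        by (simp add: inv_mult_group m_assoc subsetD)
      with s show "inv (x \<otimes> inv y) \<in> S" by simp
    next
      assume "inv (x \<otimes> inv y) \<in> S"
      moreover have "y = inv (x \<otimes> inv y) \<otimes> x" using xy
        by (simp add: inv_mult_group m_assoc)
      ultimately show "\<exists>s\<in>S. y = s \<otimes> x" by blast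
    qed
    have 2: "(\<exists>s\<in>S. x = s \<otimes> y) \<longleftrightarrow> x \<otimes> inv y \<in> S"
    proof
      assume "\<exists>s\<in>S. x = s \<otimes> y"
      then obtain s where s: "s \<in> S" "x = s \<otimes> y" by auto
      have "x \<otimes> inv y = s" using s SS xy
        by (simp add: m_assoc subsetD)
      with s show "x \<otimes> inv y \<in> S" by simp
    next
      assume "x \<otimes> inv y \<in> S"
      moreover have "x = (x \<otimes> inv y) \<otimes> y" using xy
        by (simp add: m_assoc)
      ultimately show "\<exists>s\<in>S. x = s \<otimes> y" by blast
    qed
    have 3: "inv (x \<otimes> inv y) \<in> S \<longleftrightarrow> x \<otimes> inv y \<in> S"
      using SS xy by (metis inv_closed inv_inv m_closed)
    show ?thesis unfolding cayley_adj_def using 1 2 3 True by blast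
  qed (auto simp: cayley_adj_def)
qed

lemma pc_iff:
  fixes G (structure)
  assumes "group G" "subgroup H G" "cayley_connection_set G S"
  shows "perfect_code_in G S H \<longleftrightarrow> S \<inter> H = {} \<and>
     (\<forall>x\<in>carrier G - H. \<exists>!c. c \<in> H \<and> x \<otimes>\<^bsub>G\<^esub> inv\<^bsub>G\<^esub> c \<in> S)"
proof -
  interpret group G by fact
  have Hc: "H \<subseteq> carrier G" using assms(2) subgroup.subset by blast
  have "(\<forall>x\<in>H. \<forall>y\<in>H. \<not> cayley_adj G S x y) \<longleftrightarrow> S \<inter> H = {}"
  proof
    assume a: "\<forall>x\<in>H. \<forall>y\<in>H. \<not> cayley_adj G S x y"
    show "S \<inter> H = {}"
    proof (rule ccontr)
      assume "S \<inter> H \<noteq> {}"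
      then obtain h where h: "h \<in> S" "h \<in> H" by auto
      have "one G \<in> H" using assms(2) subgroup.one_closed by blast
      then have "cayley_adj G S h \<one>" using h Hc adj_iff[OF assms(1,3)] by auto
      with a h \<open>one G \<in> H\<close> show False by blast
    qed
  next
    assume "S \<inter> H = {}"
    then show "\<forall>x\<in>H. \<forall>y\<in>H. \<not> cayley_adj G S x y"
      using adj_iff[OF assms(1,3)] assms(2) by (auto intro: subgroup.m_closed subgroup.m_inv_closed)
  qed
  moreover have "\<And>x. x \<in> carrier G \<Longrightarrow> (\<lambda>c. c \<in> H \<and> cayley_adj G S x c) = (\<lambda>c. c \<in> H \<and> x \<otimes> inv c \<in> S)"
    using adj_iff[OF assms(1,3)] Hc by auto
  ultimately show ?thesis unfolding perfect_code_in_def using Hc by simp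
qed

lemma transfer:
  fixes G (structure) and Q (structure)
  assumes grG: "group G" and grQ: "group Q" and hom: "h \<in> hom G Q"
    and surj: "h ` carrier G = carrier Q" and M: "subgroup M G"
    and ker: "\<And>x. x \<in> carrier G \<Longrightarrow> h x = \<one>\<^bsub>Q\<^esub> \<longleftrightarrow> x \<in> K"
    and KM: "K \<subseteq> M" and L: "subgroup L G" and KL: "K \<inter> L = {\<one>}"
    and KLG: "K <#> L = carrier G"
  shows "subgroup_perfect_code M G \<longleftrightarrow> subgroup_perfect_code (h ` M) Q"
proof -
  interpret G: group G by fact
  interpret Q: group Q by fact
  interpret gh: group_hom G Q h using grG grQ hom by (simp add: group_hom_def group_hom_axioms_def)
  have Mc: "M \<subseteq> carrier G" using M subgroup.subset by blast
  have Lc: "L \<subseteq> carrier G" using L subgroup.subset by blast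
  have Kc: "K \<subseteq> carrier G" using KM Mc by blast
  have hm: "\<And>x y. x \<in> carrier G \<Longrightarrow> y \<in> carrier G \<Longrightarrow> h (x \<otimes> y) = h x \<otimes>\<^bsub>Q\<^esub> h y"
    by simp
  have hi: "\<And>x. x \<in> carrier G \<Longrightarrow> h (inv x) = inv\<^bsub>Q\<^esub> h x" by simp
  have hc: "\<And>x. x \<in> carrier G \<Longrightarrow> h x \<in> carrier Q" by simp
  have eqM: "\<And>x y. x \<in> carrier G \<Longrightarrow> y \<in> M \<Longrightarrow> h x = h y \<Longrightarrow> x \<in> M"
  proof -
    fix x y assume xy: "x \<in> carrier G" "y \<in> M" "h x = h y"
    have yc: "y \<in> carrier G" using xy Mc by blast
    have "h (x \<otimes> inv y) = \<one>\<^bsub>Q\<^esub>" using xy yc by simp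
    then have "x \<otimes> inv y \<in> K" using ker[of "x \<otimes> inv y"] xy yc by simp
    then have "x \<otimes> inv y \<in> M" using KM by blast
    then have "x \<otimes> inv y \<otimes> y \<in> M" using xy M by (simp add: subgroup.m_closed)
    then show "x \<in> M" using xy yc by (simp add: G.m_assoc)
  qed
  have inhM: "\<And>x. x \<in> carrier G \<Longrightarrow> h x \<in> h ` M \<longleftrightarrow> x \<in> M"
    using eqM by auto
  have Lsurj: "\<And>y. y \<in> carrier G \<Longrightarrow> \<exists>l\<in>L. h l = h y"
  proof -
    fix y assume "y \<in> carrier G"
    then have "y \<in> K <#> L" using KLG by simp
    then obtain k l where kl: "k \<in> K" "l \<in> L" "y = k \<otimes> l" unfolding set_mult_def by auto
    have kc: "k \<in> carrier G" "l \<in> carrier G" using kl Kc Lc by auto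
    have "h k = \<one>\<^bsub>Q\<^esub>" using ker[of k] kl kc by simp
    then have "h y = h l" using kl kc by simp
    then show "\<exists>l\<in>L. h l = h y" using kl by auto
  qed
  have Linj: "\<And>l1 l2. l1 \<in> L \<Longrightarrow> l2 \<in> L \<Longrightarrow> h l1 = h l2 \<Longrightarrow> l1 = l2"
  proof -
    fix l1 l2 assume l: "l1 \<in> L" "l2 \<in> L" "h l1 = h l2"
    have lc: "l1 \<in> carrier G" "l2 \<in> carrier G" using l Lc by auto
    have "h (inv l1 \<otimes> l2) = \<one>\<^bsub>Q\<^esub>" using l lc by simp
    then have "inv l1 \<otimes> l2 \<in> K" using ker[of "inv l1 \<otimes> l2"] lc by simp
    moreover have "inv l1 \<otimes> l2 \<in> L" using l L by (simp add: subgroup.m_closed subgroup.m_inv_closed)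
    ultimately have "inv l1 \<otimes> l2 = \<one>" using KL by blast
    moreover have "l1 \<otimes> (inv l1 \<otimes> l2) = l2" using lc by (simp add: G.m_assoc[symmetric])
    ultimately show "l1 = l2" using lc by simp
  qed
  have hMsub: "subgroup (h ` M) Q" using gh.subgroup_img_is_subgroup[OF M] .
  show ?thesis
  proof
    assume "subgroup_perfect_code M G"
    then obtain S where S: "cayley_connection_set G S" "perfect_code_in G S M"
      unfolding subgroup_perfect_code_def by blast
    have Sc: "S \<subseteq> carrier G" "\<one> \<notin> S" "\<And>s. s \<in> S \<Longrightarrow> inv s \<in> S"
      using S(1) unfolding cayley_connection_set_def by auto
    have P: "S \<inter> M = {}" "\<forall>x\<in>carrier G - M. \<exists>!c. c \<in> M \<and> x \<otimes> inv c \<in> S"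
      using pc_iff[OF grG M S(1)] S(2) by auto
    define T where "T = h ` S"
    have Tc: "cayley_connection_set Q T"
    proof -
      have "T \<subseteq> carrier Q" using Sc hc unfolding T_def by auto
      moreover have "\<one>\<^bsub>Q\<^esub> \<notin> T"
      proof
        assume "\<one>\<^bsub>Q\<^esub> \<in> T"
        then obtain s where "s \<in> S" "h s = \<one>\<^bsub>Q\<^esub>" unfolding T_def by auto
        then have "s \<in> K" using ker[of s] Sc by auto
        then have "s \<in> M" using KM by blast
        with P \<open>s \<in> S\<close> show False by blast
      qed
      moreover have "\<forall>t\<in>T. inv\<^bsub>Q\<^esub> t \<in> T"
      proof
        fix t assume "t \<in> T"
        then obtain s where s: "s \<in> S" "t = h s" unfolding T_def by auto
        then have "inv\<^bsub>Q\<^esub> t = h (inv s)" using Sc by auto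
        then show "inv\<^bsub>Q\<^esub> t \<in> T" using s Sc unfolding T_def by auto
      qed
      ultimately show ?thesis unfolding cayley_connection_set_def by blast
    qed
    have "S \<inter> M = {}" by (fact P(1))
    have T1: "T \<inter> h ` M = {}"
      using P(1) inhM Sc unfolding T_def by blast
    have T2: "\<forall>u\<in>carrier Q - h ` M. \<exists>!w. w \<in> h ` M \<and> u \<otimes>\<^bsub>Q\<^esub> inv\<^bsub>Q\<^esub> w \<in> T"
    proof
      fix u assume u: "u \<in> carrier Q - h ` M"
      then obtain x where x: "x \<in> carrier G" "u = h x" using surj by auto
      have xM: "x \<notin> M" using u x by auto
      then obtain c where c: "c \<in> M" "x \<otimes> inv c \<in> S"
        and cu: "\<And>c'. c' \<in> M \<Longrightarrow> x \<otimes> inv c' \<in> S \<Longrightarrow> c' = c"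
        using P(2) x by blast
      have cc: "c \<in> carrier G" using c Mc by blast
      show "\<exists>!w. w \<in> h ` M \<and> u \<otimes>\<^bsub>Q\<^esub> inv\<^bsub>Q\<^esub> w \<in> T"
      proof
        show "h c \<in> h ` M \<and> u \<otimes>\<^bsub>Q\<^esub> inv\<^bsub>Q\<^esub> h c \<in> T"
          using c cc x unfolding T_def by (auto intro!: image_eqI[where x="x \<otimes> inv c"])
      next
        fix w assume w: "w \<in> h ` M \<and> u \<otimes>\<^bsub>Q\<^esub> inv\<^bsub>Q\<^esub> w \<in> T"
        then obtain d s where d: "d \<in> M" "w = h d" "s \<in> S" "h x \<otimes>\<^bsub>Q\<^esub> inv\<^bsub>Q\<^esub> h d = h s"
          unfolding T_def using x by auto
        have dc: "d \<in> carrier G" "s \<in> carrier G" using d Mc Sc by auto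
        define d' where "d' = inv s \<otimes> x"
        have d'c: "d' \<in> carrier G" unfolding d'_def using dc x by simp
        have "h d' = inv\<^bsub>Q\<^esub> (h x \<otimes>\<^bsub>Q\<^esub> inv\<^bsub>Q\<^esub> h d) \<otimes>\<^bsub>Q\<^esub> h x"
          unfolding d'_def using d dc x by simp
        also have "\<dots> = h d" using dc x
          by (simp add: Q.inv_mult_group Q.m_assoc)
        finally have hd': "h d' = h d" .
        then have "d' \<in> M" using eqM d d'c by blast
        moreover have "x \<otimes> inv d' = s" unfolding d'_def using dc x
          by (simp add: G.inv_mult_group G.m_assoc[symmetric])
        ultimately have "d' = c" using cu d by auto
        then have "h d = h c" using hd' by simp
        then show "w = h c" using d by simp
      qed
    qed
    have "perfect_code_in Q T (h ` M)"
      using pc_iff[OF grQ hMsub Tc] T1 T2 by blast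
    then show "subgroup_perfect_code (h ` M) Q"
      unfolding subgroup_perfect_code_def using hMsub Tc by blast
  next
    assume "subgroup_perfect_code (h ` M) Q"
    then obtain T where T: "cayley_connection_set Q T" "perfect_code_in Q T (h ` M)"
      unfolding subgroup_perfect_code_def by blast
    have Tc: "T \<subseteq> carrier Q" "\<one>\<^bsub>Q\<^esub> \<notin> T" "\<And>t. t \<in> T \<Longrightarrow> inv\<^bsub>Q\<^esub> t \<in> T"
      using T(1) unfolding cayley_connection_set_def by auto
    have P: "T \<inter> h ` M = {}" "\<forall>u\<in>carrier Q - h ` M. \<exists>!w. w \<in> h ` M \<and> u \<otimes>\<^bsub>Q\<^esub> inv\<^bsub>Q\<^esub> w \<in> T"
      using pc_iff[OF grQ hMsub T(1)] T(2) by auto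
    define S where "S = {l \<in> L. h l \<in> T}"
    have Sc: "cayley_connection_set G S"
    proof -
      have "S \<subseteq> carrier G" using Lc unfolding S_def by auto
      moreover have "\<one> \<notin> S" using Tc unfolding S_def by auto
      moreover have "\<forall>s\<in>S. inv s \<in> S"
        using Tc Lc L unfolding S_def by (auto simp: subgroup.m_inv_closed subsetD)
      ultimately show ?thesis unfolding cayley_connection_set_def by blast
    qed
    have S1: "S \<inter> M = {}" using P(1) unfolding S_def by auto
    have S2: "\<forall>x\<in>carrier G - M. \<exists>!c. c \<in> M \<and> x \<otimes> inv c \<in> S"
    proof
      fix x assume x: "x \<in> carrier G - M"
      then have u: "h x \<in> carrier Q - h ` M" using inhM by auto
      have ex: "\<exists>!w. w \<in> h ` M \<and> h x \<otimes>\<^bsub>Q\<^esub> inv\<^bsub>Q\<^esub> w \<in> T" using bspec[OF P(2) u] .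
      then obtain w where w: "w \<in> h ` M" "h x \<otimes>\<^bsub>Q\<^esub> inv\<^bsub>Q\<^esub> w \<in> T"
        and Cu: "\<And>w'. w' \<in> h ` M \<Longrightarrow> h x \<otimes>\<^bsub>Q\<^esub> inv\<^bsub>Q\<^esub> w' \<in> T \<Longrightarrow> w' = w"
        by (metis ex)
      obtain c where c: "c \<in> M" "w = h c" using w by auto
      have cc: "c \<in> carrier G" using c Mc by blast
      obtain l where l: "l \<in> L" "h l = h (x \<otimes> inv c)" using Lsurj[of "x \<otimes> inv c"] x cc by auto
      have lc: "l \<in> carrier G" using l Lc by blast
      define c' where "c' = inv l \<otimes> x"
      have c'c: "c' \<in> carrier G" unfolding c'_def using lc x by simp
        have "h c' = inv\<^bsub>Q\<^esub> (h x \<otimes>\<^bsub>Q\<^esub> inv\<^bsub>Q\<^esub> h c) \<otimes>\<^bsub>Q\<^esub> h x"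
          unfolding c'_def using l lc cc x by simp
        also have "\<dots> = h c" using cc x
          by (simp add: Q.inv_mult_group Q.m_assoc)
        finally have hc': "h c' = h c" .
        then have "c' \<in> M" using eqM c c'c by blast
        moreover have "x \<otimes> inv c' = l" unfolding c'_def using lc x
          by (simp add: G.inv_mult_group G.m_assoc[symmetric])
        moreover have "h l \<in> T" using l w c x cc by simp
        ultimately have c'S: "c' \<in> M \<and> x \<otimes> inv c' \<in> S" unfolding S_def using l by simp
      have xl: "x \<otimes> inv c' = l" unfolding c'_def using lc x
          by (simp add: G.inv_mult_group G.m_assoc[symmetric])
      show "\<exists>!c. c \<in> M \<and> x \<otimes> inv c \<in> S"
      proof
        show "c' \<in> M \<and> x \<otimes> inv c' \<in> S" by (fact c'S)
      next
        fix d assume d: "d \<in> M \<and> x \<otimes> inv d \<in> S"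
        have dc: "d \<in> carrier G" using d Mc by blast
        have "h x \<otimes>\<^bsub>Q\<^esub> inv\<^bsub>Q\<^esub> h d \<in> T" using d dc x unfolding S_def by simp
        then have "h d = w" using Cu d by blast
        have "x \<otimes> inv d \<in> L" "x \<otimes> inv c' \<in> L" using d xl l unfolding S_def by auto
        moreover have "h (x \<otimes> inv d) = h (x \<otimes> inv c')" 
          using \<open>h d = w\<close> c hc' dc c'c x by simp
        ultimately have "x \<otimes> inv d = x \<otimes> inv c'" using Linj by blast
        then have "inv d = inv c'" using dc c'c x G.l_cancel[of x "inv d" "inv c'"] by simp
        then show "d = c'" using dc c'c by (metis G.inv_inv)
      qed
    qed
    have "perfect_code_in G S M" using pc_iff[OF grG M Sc] S1 S2 by blast
    then show "subgroup_perfect_code M G"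
      unfolding subgroup_perfect_code_def using M Sc by blast
  qed
qed

theorem theorem4p4:
  fixes G :: "('a, 'b) monoid_scheme" and M K :: "'a set"
  assumes "group G" and "finite (carrier G)"
    and "subgroup M G" and "K \<lhd> G" and "K \<subseteq> M"
    and "\<exists>L. subgroup L G \<and> K \<inter> L = {\<one>\<^bsub>G\<^esub>} \<and> K <#>\<^bsub>G\<^esub> L = carrier G"
  shows "subgroup_perfect_code M G \<longleftrightarrow>
         subgroup_perfect_code ((\<lambda>m. K #>\<^bsub>G\<^esub> m) ` M) (G Mod K)"
proof -
  interpret N: normal K G by fact
  obtain L where L: "subgroup L G" "K \<inter> L = {\<one>\<^bsub>G\<^esub>}" "K <#>\<^bsub>G\<^esub> L = carrier G"
    using assms(6) by blast
  have ker: "\<And>x. x \<in> carrier G \<Longrightarrow> (K #>\<^bsub>G\<^esub> x = \<one>\<^bsub>G Mod K\<^esub>) \<longleftrightarrow> x \<in> K"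
  proof -
    fix x assume x: "x \<in> carrier G"
    show "(K #>\<^bsub>G\<^esub> x = \<one>\<^bsub>G Mod K\<^esub>) \<longleftrightarrow> x \<in> K"
    proof
      assume "K #>\<^bsub>G\<^esub> x = \<one>\<^bsub>G Mod K\<^esub>"
      moreover have "x \<in> K #>\<^bsub>G\<^esub> x" using x N.rcos_self N.subgroup_axioms by blast
      ultimately show "x \<in> K" by simp
    next
      assume "x \<in> K"
      then show "K #>\<^bsub>G\<^esub> x = \<one>\<^bsub>G Mod K\<^esub>" by (simp add: N.rcos_const)
    qed
  qed
  show ?thesis
    by (rule transfer[OF assms(1) N.factorgroup_is_group N.r_coset_hom_Mod
        carrier_FactGroup[symmetric] assms(3) ker assms(5) L])
qed

end
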